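(* When CTS is run on a CMAB-PTA instance (as in the context), for every $i\in[m]$, every $\bm\mu\in[0,1]^m$ and every $\rho\in(0,1)$, \[ \mathbb{E}\Big[\sum_{t=1}^T\mathbb{I}\{i\in\tilde S(t),\ N_i(t)\le(1-\rho)p_iM_i(t)\}\ \Big|\ \bm\mu\Big]\le 1+\frac{2}{\rho^2p^*}. \]
   Context: CMAB-PTA setting: there are $m$ base arms $[m]$ and a known family $\mathcal{I}\subseteq 2^{[m]}$ of feasible super arms. In each round $t$, the environment draws $\bm X(t)\in[0,1]^m$ from an unknown distribution $D=D_1\times\cdots\times D_m$ independently across rounds, with mean vector $\bm\mu$. The learner selects $S(t)\in\mathcal{I}$; the triggered set $S'(t)\supseteq S(t)$ is drawn as $S'(t)\sim D^{\mathrm{trig}}(S(t),\bm X(t))$; the learner observes $\{(i,X_i(t)):i\in S'(t)\}$. $p_i^S$ is the probability that arm $i$ is triggered when $S$ is selected; $\tilde S=\{i:p_i^S>0\}$; $\tilde S(t)$ denotes the triggering set of $S(t)$; $p_i=\min_{S\in\mathcal{I}:i\in\tilde S}p_i^S$, $p^*=\min_i p_i>0$. Counters: $M_i(t)=\sum_{\tau=1}^{t-1}\mathbb{I}\{i\in\tilde S(\tau)\}$, $N_i(t)=\sum_{\tau=1}^{t-1}\mathbb{I}\{i\in S'(\tau)\}$. CTS: with an exact oracle returning $\mathrm{Oracle}(\bm\theta)\in\arg\max_{S\in\mathcal{I}}r(S,\bm\theta)$, where $r(S,\bm\mu)$ is the expected reward of $S$; initialize $a_i=b_i=1$; each round draw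 $\theta_i(t)\sim\mathrm{Beta}(a_i,b_i)$ independently, select $S(t)=\mathrm{Oracle}(\bm\theta(t))$, and for each observed $(i,X_i)$ draw $Y_i\sim\mathrm{Bernoulli}(X_i)$ and update $a_i\leftarrow a_i+Y_i$, $b_i\leftarrow b_i+1-Y_i$. *)

theory Defs
  imports "HOL-Probability.Probability"
begin

text \<open>Arms are 0..<m. A round record is (S, S', Y) where S is the selected super arm,
  S' the triggered set and Y the set of observed arms whose Bernoulli draw Y_i was 1.\<close>

type_synonym rnd = "nat set \<times> nat set \<times> nat set"

definition beta_pdf :: "nat \<Rightarrow> nat \<Rightarrow> real \<Rightarrow> real" where
  "beta_pdf a b x = (if 0 < x \<and> x < 1
     then fact (a + b - 1) / (fact (a - 1) * fact (b - 1)) * x ^ (a - 1) * (1 - x) ^ (b - 1)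
     else 0)"

definition beta_measure :: "nat \<Rightarrow> nat \<Rightarrow> real measure" where
  "beta_measure a b = density lborel (\<lambda>x. ennreal (beta_pdf a b x))"

text \<open>Beta posterior parameters a_i, b_i after history h (oldest round first).\<close>
definition cts_a :: "rnd list \<Rightarrow> nat \<Rightarrow> nat" where
  "cts_a h i = Suc (length (filter (\<lambda>(S, S', Y). i \<in> S' \<and> i \<in> Y) h))"

definition cts_b :: "rnd list \<Rightarrow> nat \<Rightarrow> nat" where
  "cts_b h i = Suc (length (filter (\<lambda>(S, S', Y). i \<in> S' \<and> i \<notin> Y) h))"

definition obs_pmf :: "(nat set \<Rightarrow> (nat \<Rightarrow> real) \<Rightarrow> nat set pmf) \<Rightarrow> nat set \<Rightarrow> (nat \<Rightarrow> real)
    \<Rightarrow> (nat set \<times> nat set) pmf" where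
  "obs_pmf Dtrig S X = bind_pmf (Dtrig S X)
     (\<lambda>S'. map_pmf (\<lambda>Yf. (S', {j. Yf j})) (Pi_pmf S' False (\<lambda>j. bernoulli_pmf (X j))))"

definition cts_round :: "nat \<Rightarrow> (nat \<Rightarrow> real measure) \<Rightarrow> (nat set \<Rightarrow> (nat \<Rightarrow> real) \<Rightarrow> nat set pmf)
    \<Rightarrow> ((nat \<Rightarrow> real) \<Rightarrow> nat set) \<Rightarrow> rnd list \<Rightarrow> rnd measure" where
  "cts_round m D Dtrig Oracle h =
     bind (PiM {..<m} (\<lambda>j. beta_measure (cts_a h j) (cts_b h j))) (\<lambda>\<theta>.
       bind (PiM {..<m} D) (\<lambda>X.
         measure_pmf (map_pmf (\<lambda>(S', Y). (Oracle \<theta>, S', Y)) (obs_pmf Dtrig (Oracle \<theta>) X))))"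

primrec cts_traj :: "nat \<Rightarrow> (nat \<Rightarrow> real measure) \<Rightarrow> (nat set \<Rightarrow> (nat \<Rightarrow> real) \<Rightarrow> nat set pmf)
    \<Rightarrow> ((nat \<Rightarrow> real) \<Rightarrow> nat set) \<Rightarrow> nat \<Rightarrow> rnd list measure" where
  "cts_traj m D Dtrig Oracle 0 = return (count_space UNIV) []"
| "cts_traj m D Dtrig Oracle (Suc n) =
     bind (cts_traj m D Dtrig Oracle n)
       (\<lambda>h. distr (cts_round m D Dtrig Oracle h) (count_space UNIV) (\<lambda>r. h @ [r]))"

definition ptrig :: "nat \<Rightarrow> (nat \<Rightarrow> real measure) \<Rightarrow> (nat set \<Rightarrow> (nat \<Rightarrow> real) \<Rightarrow> nat set pmf)
    \<Rightarrow> nat set \<Rightarrow> nat \<Rightarrow> real" where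
  "ptrig m D Dtrig S i = (\<integral>X. measure_pmf.prob (Dtrig S X) {S'. i \<in> S'} \<partial>(PiM {..<m} D))"

definition trigset :: "nat \<Rightarrow> (nat \<Rightarrow> real measure) \<Rightarrow> (nat set \<Rightarrow> (nat \<Rightarrow> real) \<Rightarrow> nat set pmf)
    \<Rightarrow> nat set \<Rightarrow> nat set" where
  "trigset m D Dtrig S = {i. ptrig m D Dtrig S i > 0}"

definition p_arm :: "nat \<Rightarrow> nat set set \<Rightarrow> (nat \<Rightarrow> real measure) \<Rightarrow> (nat set \<Rightarrow> (nat \<Rightarrow> real) \<Rightarrow> nat set pmf)
    \<Rightarrow> nat \<Rightarrow> real" where
  "p_arm m I D Dtrig i = Min {ptrig m D Dtrig S i | S. S \<in> I \<and> i \<in> trigset m D Dtrig S}"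

definition p_star :: "nat \<Rightarrow> nat set set \<Rightarrow> (nat \<Rightarrow> real measure) \<Rightarrow> (nat set \<Rightarrow> (nat \<Rightarrow> real) \<Rightarrow> nat set pmf)
    \<Rightarrow> real" where
  "p_star m I D Dtrig = Min (p_arm m I D Dtrig ` {..<m})"

text \<open>M_i(t) and N_i(t) computed from the history of the first t-1 rounds.\<close>
definition cnt_M :: "nat \<Rightarrow> (nat \<Rightarrow> real measure) \<Rightarrow> (nat set \<Rightarrow> (nat \<Rightarrow> real) \<Rightarrow> nat set pmf)
    \<Rightarrow> rnd list \<Rightarrow> nat \<Rightarrow> nat" where
  "cnt_M m D Dtrig h i = length (filter (\<lambda>(S, S', Y). i \<in> trigset m D Dtrig S) h)"

definition cnt_N :: "rnd list \<Rightarrow> nat \<Rightarrow> nat" where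
  "cnt_N h i = length (filter (\<lambda>(S, S', Y). i \<in> S') h)"

definition bad_count :: "nat \<Rightarrow> nat set set \<Rightarrow> (nat \<Rightarrow> real measure) \<Rightarrow> (nat set \<Rightarrow> (nat \<Rightarrow> real) \<Rightarrow> nat set pmf)
    \<Rightarrow> nat \<Rightarrow> real \<Rightarrow> rnd list \<Rightarrow> real" where
  "bad_count m I D Dtrig i \<rho> h = (\<Sum>k<length h.
      if i \<in> trigset m D Dtrig (fst (h ! k)) \<and>
         real (cnt_N (take k h) i) \<le> (1 - \<rho>) * p_arm m I D Dtrig i * real (cnt_M m D Dtrig (take k h) i)
      then 1 else 0)"

end

theory Submission imports Defs "HOL-Analysis.Analysis" begin


lemma log_aux:
  fixes x :: real assumes "0 \<le> x" "x < 1"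
  shows "(1 - x) * ln (1 - x) \<ge> x^2/2 - x"
proof -
  let ?f = "\<lambda>x::real. (1 - x) * ln (1 - x) + x - x^2/2"
  have "?f 0 \<le> ?f x"
  proof (rule DERIV_nonneg_imp_nondecreasing[OF assms(1)])
    fix y assume y: "0 \<le> y" "y \<le> x"
    then have y1: "y < 1" using assms by simp
    have "(?f has_real_derivative (- ln (1 - y) - y)) (at y)"
      using y1 apply (auto intro!: derivative_eq_intros)
      done
    moreover have "- ln (1 - y) - y \<ge> 0" using ln_add_one_self_le_self2[of "-y"] y1
      by (smt (verit) ln_le_minus_one y1)
    ultimately show "\<exists>d. (?f has_real_derivative d) (at y) \<and> 0 \<le> d" by blast
  qed
  then show ?thesis by simp
qed

lemma key_real:
  fixes \<rho> p ps :: real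
  assumes r: "0 < \<rho>" "\<rho> < 1" and p: "0 < p" "p \<le> 1" and ps: "0 < ps" "ps \<le> p"
  defines "c \<equiv> (1 - \<rho> * p) * (1 - \<rho>) powr (- ((1 - \<rho>) * p))"
  shows "0 \<le> c" "c < 1" "1 / (1 - c) \<le> 1 + 2 / (\<rho>^2 * ps)"
proof -
  have rp: "0 < 1 - \<rho> * p" using r p by (smt (verit) mult_left_le mult_less_cancel_left1)
  show "0 \<le> c" unfolding c_def using rp by simp
  define a where "a = p * \<rho>^2 / 2"
  have apos: "a > 0" unfolding a_def using r p by simp
  have "ln c = ln (1 - \<rho> * p) - (1 - \<rho>) * p * ln (1 - \<rho>)"
    unfolding c_def using rp r by (simp add: ln_mult ln_powr)
  also have "\<dots> \<le> - (\<rho> * p) - p * ((1 - \<rho>) * ln (1 - \<rho>))"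
    using ln_le_minus_one[of "1 - \<rho> * p"] rp by (simp add: algebra_simps)
  also have "\<dots> \<le> - (\<rho> * p) - p * (\<rho>^2/2 - \<rho>)"
    using log_aux[of \<rho>] r p by (intro diff_mono mult_left_mono) auto
  also have "\<dots> = - a" unfolding a_def by (simp add: algebra_simps)
  finally have lc: "ln c \<le> - a" .
  have cpos: "c > 0" unfolding c_def using rp r by simp
  have ce: "c \<le> exp (- a)" using lc cpos by (metis exp_le_cancel_iff exp_ln)
  have ea: "exp (- a) < 1" using apos by simp
  then show "c < 1" using ce by linarith
  have "1 + a \<le> exp a" by (rule exp_ge_add_one_self)
  then have "(1 + a) * exp (- a) \<le> 1"
    by (metis exp_gt_zero exp_minus_inverse mult_right_mono order.strict_implies_order)
  then have h: "1 / (1 - exp (- a)) \<le> 1 + 1 / a"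
    using apos ea by (simp add: field_simps)
  have "1 / (1 - c) \<le> 1 / (1 - exp (- a))"
    using ce ea mult_pos_pos[of "1 - c" "1 - exp (- a)"] by (intro divide_left_mono) (auto simp: algebra_simps)
  also have "\<dots> \<le> 1 + 1 / a" by (rule h)
  also have "1 / a = 2 / (\<rho>^2 * p)" unfolding a_def by simp
  also have "\<dots> \<le> 2 / (\<rho>^2 * ps)" using r ps by (intro divide_left_mono mult_left_mono) auto
  finally show "1 / (1 - c) \<le> 1 + 2 / (\<rho>^2 * ps)" by simp
qed




lemma beta_prob:
  assumes a: "1 \<le> a" and b: "1 \<le> b"
  shows "prob_space (beta_measure a b)"
proof -
  define C where "C = fact (a + b - 1) / (fact (a - 1) * fact (b - 1) :: real)"
  have Cpos: "C > 0" unfolding C_def by simp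
  have B: "Beta (real a) (real b) = fact (a - 1) * fact (b - 1) / fact (a + b - 1)"
  proof -
    have g: "Gamma (real n) = fact (n - 1)" if "1 \<le> n" for n
      using Gamma_fact[of "n - 1", where 'a=real] that by (simp add: of_nat_diff)
    have "real a + real b = real (a + b)" by simp
    then show ?thesis unfolding Beta_def using g[OF a] g[OF b] g[of "a+b"] a by simp
  qed
  have hi: "((\<lambda>t. t powr (real a - 1) * (1 - t) powr (real b - 1)) has_integral Beta a b) {0<..<1}"
    using has_integral_Beta_real[of a b] a b by (simp add: has_integral_Icc_iff_Ioo)
  have hi2: "((\<lambda>t. C * (t powr (real a - 1) * (1 - t) powr (real b - 1))) has_integral C * Beta a b) {0<..<1}"
    using has_integral_mult_right[OF hi] .
  have one: "C * Beta a b = 1" unfolding C_def B by simp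
  have eq: "ennreal (beta_pdf a b x) = ennreal (C * (x powr (real a - 1) * (1 - x) powr (real b - 1))) * indicator {0<..<1} x" for x
  proof (cases "0 < x \<and> x < 1")
    case True
    have "x powr (real a - 1) = x ^ (a - 1)" using True a by (simp add: powr_realpow[symmetric] of_nat_diff)
    moreover have "(1 - x) powr (real b - 1) = (1 - x) ^ (b - 1)" using True b by (simp add: powr_realpow[symmetric] of_nat_diff)
    ultimately show ?thesis using True unfolding beta_pdf_def C_def by (simp add: mult.assoc)
  qed (auto simp: beta_pdf_def indicator_def)
  have "emeasure (beta_measure a b) (space (beta_measure a b)) = 1"
    unfolding beta_measure_def
    apply (subst emeasure_density)
      apply (simp add: beta_pdf_def)
     apply simp
    apply (simp add: eq)
    apply (subst nn_integral_has_integral_lebesgue'[OF _ hi2])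
    using Cpos by (auto simp: one)
  then show ?thesis by (rule prob_spaceI)
qed




definition fmeas :: "'a measure \<Rightarrow> ('a \<Rightarrow> 'b pmf) \<Rightarrow> 'b set \<Rightarrow> bool" where
  "fmeas L p F \<longleftrightarrow> finite F \<and> (\<forall>x\<in>space L. set_pmf (p x) \<subseteq> F) \<and>
     (\<forall>y. (\<lambda>x. pmf (p x) y) \<in> borel_measurable L)"

definition fm :: "'a measure \<Rightarrow> ('a \<Rightarrow> 'b pmf) \<Rightarrow> bool" where
  "fm L p \<longleftrightarrow> (\<exists>F. fmeas L p F)"

lemma fmeas_mono: "fmeas L p F \<Longrightarrow> F \<subseteq> G \<Longrightarrow> finite G \<Longrightarrow> fmeas L p G"
  unfolding fmeas_def by blast

lemma fmeas_measurable:
  assumes "fmeas L p F"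
  shows "(\<lambda>x. measure_pmf (p x)) \<in> measurable L (subprob_algebra (count_space UNIV))"
proof (rule measurable_subprob_algebra)
  fix a assume "a \<in> space L" then show "subprob_space (measure_pmf (p a))"
    by (simp add: prob_space_imp_subprob_space prob_space_measure_pmf)
next
  fix a show "sets (measure_pmf (p a)) = sets (count_space UNIV)" by simp
next
  fix A :: "'b set"
  have F: "finite F" "\<And>x. x \<in> space L \<Longrightarrow> set_pmf (p x) \<subseteq> F"
    "\<And>y. (\<lambda>x. pmf (p x) y) \<in> borel_measurable L" using assms unfolding fmeas_def by auto
  have eq: "emeasure (measure_pmf (p x)) A = (\<Sum>s\<in>A \<inter> F. ennreal (pmf (p x) s))"
    if x: "x \<in> space L" for x
  proof -
    have "emeasure (measure_pmf (p x)) A = emeasure (measure_pmf (p x)) (A \<inter> set_pmf (p x))"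
      by (simp add: emeasure_Int_set_pmf)
    also have "A \<inter> set_pmf (p x) = (A \<inter> F) \<inter> set_pmf (p x)" using F(2)[OF x] by auto
    also have "emeasure (measure_pmf (p x)) \<dots> = emeasure (measure_pmf (p x)) (A \<inter> F)"
      by (simp add: emeasure_Int_set_pmf)
    also have "\<dots> = (\<Sum>s\<in>A \<inter> F. ennreal (pmf (p x) s))"
      using F(1) by (simp add: emeasure_measure_pmf_finite)
    finally show ?thesis .
  qed
  have [measurable]: "\<And>y. (\<lambda>x. pmf (p x) y) \<in> borel_measurable L" by (rule F(3))
  show "(\<lambda>a. emeasure (measure_pmf (p a)) A) \<in> borel_measurable L"
    by (subst measurable_cong[OF eq]) measurable
qed

lemma fm_measurable:
  "fm L p \<Longrightarrow> (\<lambda>x. measure_pmf (p x)) \<in> measurable L (subprob_algebra (count_space UNIV))"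
  unfolding fm_def using fmeas_measurable by blast

lemma fmeas_bind:
  assumes p: "fmeas L p F" and f: "\<And>y. y \<in> F \<Longrightarrow> fmeas L (\<lambda>x. f x y) G" and fG: "finite G"
  shows "fmeas L (\<lambda>x. bind_pmf (p x) (f x)) G"
proof -
  have F: "finite F" "\<And>x. x \<in> space L \<Longrightarrow> set_pmf (p x) \<subseteq> F"
    "\<And>y. (\<lambda>x. pmf (p x) y) \<in> borel_measurable L" using p unfolding fmeas_def by auto
  have G: "finite G" "\<And>x y. y \<in> F \<Longrightarrow> x \<in> space L \<Longrightarrow> set_pmf (f x y) \<subseteq> G"
    "\<And>y z. y \<in> F \<Longrightarrow> (\<lambda>x. pmf (f x y) z) \<in> borel_measurable L" using f fG unfolding fmeas_def by auto
  have eq: "pmf (bind_pmf (p x) (f x)) z = (\<Sum>a\<in>F. pmf (p x) a * pmf (f x a) z)"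
    if x: "x \<in> space L" for x z
    unfolding pmf_bind using F(2)[OF x] by (subst integral_measure_pmf[OF F(1)]) auto
  show ?thesis unfolding fmeas_def
  proof (intro conjI ballI allI)
    show "finite G" by (rule G(1))
  next
    fix x assume x: "x \<in> space L"
    show "set_pmf (bind_pmf (p x) (f x)) \<subseteq> G" using F(2)[OF x] G(2)[OF _ x] by auto
  next
    fix z show "(\<lambda>x. pmf (bind_pmf (p x) (f x)) z) \<in> borel_measurable L"
      by (subst measurable_cong[OF eq]) (auto intro!: borel_measurable_sum borel_measurable_times F(3) G(3))
  qed
qed

lemma fm_bind:
  assumes p: "fmeas L p F" and f: "\<And>y. y \<in> F \<Longrightarrow> fm L (\<lambda>x. f x y)"
  shows "fm L (\<lambda>x. bind_pmf (p x) (f x))"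
proof -
  obtain G where G: "\<And>y. y \<in> F \<Longrightarrow> fmeas L (\<lambda>x. f x y) (G y)"
    using f unfolding fm_def by metis
  have fin: "finite F" using p unfolding fmeas_def by auto
  have "fmeas L (\<lambda>x. f x y) (\<Union>y\<in>F. G y)" if "y \<in> F" for y
    using G[OF that] fin G that by (intro fmeas_mono[OF G[OF that]]) (auto simp: fmeas_def)
  moreover have "finite (\<Union>y\<in>F. G y)" using fin G by (auto simp: fmeas_def)
  ultimately show ?thesis unfolding fm_def by (blast intro: fmeas_bind[OF p])
qed

lemma fm_bind':
  assumes p: "fm L p" and f: "\<And>y. fm L (\<lambda>x. f x y)"
  shows "fm L (\<lambda>x. bind_pmf (p x) (f x))"
  using p f fm_bind unfolding fm_def[of L p] by blast

lemma fm_const: "finite (set_pmf q) \<Longrightarrow> fm L (\<lambda>_. q)"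
  unfolding fm_def fmeas_def by auto

lemma fm_return: "fm L (\<lambda>_. return_pmf c)"
  by (rule fm_const) simp

lemma fm_map: "fm L p \<Longrightarrow> fm L (\<lambda>x. map_pmf g (p x))"
  unfolding map_pmf_def by (intro fm_bind' fm_return)

lemma fm_pair: "fm L p \<Longrightarrow> fm L q \<Longrightarrow> fm L (\<lambda>x. pair_pmf (p x) (q x))"
  unfolding pair_pmf_def by (intro fm_bind' fm_return)

context begin
interpretation pmf_as_function .
lemma pmf_bernoulli: "pmf (bernoulli_pmf p) b = (if b then min 1 (max 0 p) else 1 - min 1 (max 0 p))"
  by transfer auto
end

lemma fm_bernoulli:
  assumes "q \<in> borel_measurable L"
  shows "fm L (\<lambda>x. bernoulli_pmf (q x))"
proof -
  note assms[measurable]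
  show ?thesis unfolding fm_def fmeas_def
    by (rule exI[of _ UNIV]) (auto simp: pmf_bernoulli)
qed

lemma fm_Pi:
  assumes "finite A" "\<forall>j\<in>A. (\<lambda>x. q x j) \<in> borel_measurable L"
  shows "fm L (\<lambda>x. Pi_pmf A False (\<lambda>j. bernoulli_pmf (q x j)))"
  using assms
proof (induction A rule: finite_induct)
  case empty then show ?case by (simp add: fm_return)
next
  case (insert a A)
  show ?case
    by (subst Pi_pmf_insert[OF insert(1,2)])
       (intro fm_map fm_pair fm_bernoulli insert, use insert(4) in auto)
qed




locale cts =
  fixes m :: nat and I :: "nat set set" and D :: "nat \<Rightarrow> real measure"
    and Dtrig :: "nat set \<Rightarrow> (nat \<Rightarrow> real) \<Rightarrow> nat set pmf"
    and Oracle :: "(nat \<Rightarrow> real) \<Rightarrow> nat set"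
    and i :: nat and \<rho> :: real
  assumes D: "\<forall>j<m. prob_space (D j) \<and> sets (D j) = sets borel"
    and trig: "\<forall>S\<in>I. \<forall>X. set_pmf (Dtrig S X) \<subseteq> {S'. S \<subseteq> S' \<and> S' \<subseteq> {..<m}}"
    and trig_meas: "\<forall>S\<in>I. (\<lambda>X. measure_pmf (Dtrig S X))
                      \<in> measurable (PiM {..<m} (\<lambda>_. borel)) (subprob_algebra (count_space UNIV))"
    and orc: "\<forall>\<theta>. Oracle \<theta> \<in> I"
    and orc_meas: "Oracle \<in> measurable (PiM {..<m} (\<lambda>_. borel)) (count_space UNIV)"
begin

abbreviation "Xm \<equiv> PiM {..<m} D"

lemma Xm_prob: "prob_space Xm"
  using D by (intro prob_space_PiM) auto

lemma sets_Xm: "sets Xm = sets (PiM {..<m} (\<lambda>_. borel))"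
  using D by (intro sets_PiM_cong) auto

lemma trig_meas': "S \<in> I \<Longrightarrow> (\<lambda>X. measure_pmf (Dtrig S X)) \<in> measurable Xm (subprob_algebra (count_space UNIV))"
  using trig_meas by (subst measurable_cong_sets[OF sets_Xm refl]) auto

lemma comp_meas: "j < m \<Longrightarrow> (\<lambda>X. X j) \<in> borel_measurable Xm"
  by (subst measurable_cong_sets[OF sets_Xm refl]) (rule measurable_component_singleton, simp)

lemma fmeas_trig: "S \<in> I \<Longrightarrow> fmeas Xm (\<lambda>X. Dtrig S X) (Pow {..<m})"
  unfolding fmeas_def
proof (intro conjI ballI allI)
  assume S: "S \<in> I"
  show "finite (Pow {..<m})" by simp
  fix X show "set_pmf (Dtrig S X) \<subseteq> Pow {..<m}" using trig S by fastforce
next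
  fix y assume S: "S \<in> I"
  show "(\<lambda>X. pmf (Dtrig S X) y) \<in> borel_measurable Xm"
    unfolding measure_pmf_single[symmetric]
    by (rule measurable_compose[OF trig_meas'[OF S] measurable_measure_subprob_algebra]) simp
qed

lemma fm_obs: "S \<in> I \<Longrightarrow> fm Xm (\<lambda>X. obs_pmf Dtrig S X)"
  unfolding obs_pmf_def
  by (rule fm_bind[OF fmeas_trig]) (auto intro!: fm_map fm_Pi comp_meas intro: finite_subset)

lemma obs_meas: "S \<in> I \<Longrightarrow> (\<lambda>X. measure_pmf (map_pmf g (obs_pmf Dtrig S X))) \<in> measurable Xm (subprob_algebra (count_space UNIV))"
  by (intro fm_measurable fm_map fm_obs)

lemma ptrig_bounds:
  assumes S: "S \<in> I" shows "0 \<le> ptrig m D Dtrig S i" "ptrig m D Dtrig S i \<le> 1"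
proof -
  interpret X: prob_space Xm by (rule Xm_prob)
  let ?P = "\<lambda>X. measure_pmf.prob (Dtrig S X) {S'. i \<in> S'}"
  have Pm: "?P \<in> borel_measurable Xm"
    by (rule measurable_compose[OF trig_meas'[OF S] measurable_measure_subprob_algebra]) simp
  have iP: "integrable Xm ?P" by (rule X.integrable_const_bound[where B=1]) (simp, rule Pm)
  show "0 \<le> ptrig m D Dtrig S i" unfolding ptrig_def by (rule integral_nonneg_AE) simp
  have "(\<integral>X. ?P X \<partial>Xm) \<le> (\<integral>X. 1 \<partial>Xm)"
    by (rule integral_mono[OF iP]) auto
  then show "ptrig m D Dtrig S i \<le> 1" unfolding ptrig_def by (simp add: X.prob_space)
qed

lemma L1:
  assumes S: "S \<in> I" and A: "0 \<le> A" "0 \<le> A + B"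
  shows "(\<integral>\<^sup>+X. \<integral>\<^sup>+z. ennreal (A + B * (if i \<in> fst z then 1 else 0)) \<partial>measure_pmf (obs_pmf Dtrig S X) \<partial>Xm)
         = ennreal (A + B * ptrig m D Dtrig S i)"
proof -
  interpret X: prob_space Xm by (rule Xm_prob)
  let ?P = "\<lambda>X. measure_pmf.prob (Dtrig S X) {S'. i \<in> S'}"
  have inner: "(\<integral>\<^sup>+z. ennreal (A + B * (if i \<in> fst z then 1 else 0)) \<partial>measure_pmf (obs_pmf Dtrig S X))
      = ennreal (A + B * ?P X)" for X
  proof -
    have fin: "finite (set_pmf (Dtrig S X))"
      by (rule finite_subset[of _ "Pow {..<m}"]) (use trig S in fastforce)+
    have "(\<integral>\<^sup>+z. ennreal (A + B * (if i \<in> fst z then 1 else 0)) \<partial>measure_pmf (obs_pmf Dtrig S X))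
       = (\<integral>\<^sup>+S'. ennreal (A + B * indicator {S'. i \<in> S'} S') \<partial>measure_pmf (Dtrig S X))"
      unfolding obs_pmf_def nn_integral_bind_pmf nn_integral_map_pmf
      by (simp add: measure_pmf.emeasure_space_1 indicator_def of_bool_def)
    also have "\<dots> = ennreal (\<integral>S'. A + B * indicator {S'. i \<in> S'} S' \<partial>measure_pmf (Dtrig S X))"
    proof (rule nn_integral_eq_integral)
      from fin show "integrable (measure_pmf (Dtrig S X)) (\<lambda>S'. A + B * indicator {S'. i \<in> S'} S')"
        by (rule integrable_measure_pmf_finite)
      show "AE x in measure_pmf (Dtrig S X). 0 \<le> A + B * indicator {S'. i \<in> S'} x"
        using A by (auto simp: indicator_def)
    qed
    also have "(\<integral>S'. A + B * indicator {S'. i \<in> S'} S' \<partial>measure_pmf (Dtrig S X)) = A + B * ?P X"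
    proof -
      have "(\<integral>S'. A + B * indicator {S'. i \<in> S'} S' \<partial>measure_pmf (Dtrig S X))
         = (\<integral>S'. A \<partial>measure_pmf (Dtrig S X)) + (\<integral>S'. B * indicator {S'. i \<in> S'} S' \<partial>measure_pmf (Dtrig S X))"
        by (rule Bochner_Integration.integral_add) (rule integrable_measure_pmf_finite[OF fin])+
      then show ?thesis by (simp add: measure_pmf.prob_space)
    qed
    finally show ?thesis .
  qed
  have Pm: "?P \<in> borel_measurable Xm"
    by (rule measurable_compose[OF trig_meas'[OF S] measurable_measure_subprob_algebra]) simp
  have "(\<integral>\<^sup>+X. ennreal (A + B * ?P X) \<partial>Xm) = ennreal (\<integral>X. A + B * ?P X \<partial>Xm)"
  proof (rule nn_integral_eq_integral)
    show "integrable Xm (\<lambda>X. A + B * ?P X)"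
    proof (rule X.integrable_const_bound[where B="\<bar>A\<bar> + \<bar>B\<bar>"])
      show "(\<lambda>X. A + B * ?P X) \<in> borel_measurable Xm"
        by (intro borel_measurable_add borel_measurable_times borel_measurable_const Pm)
      show "AE X in Xm. norm (A + B * ?P X) \<le> \<bar>A\<bar> + \<bar>B\<bar>"
      proof (rule AE_I2)
        fix X
        have "0 \<le> ?P X" "?P X \<le> 1" by auto
        then have "\<bar>B * ?P X\<bar> \<le> \<bar>B\<bar>" by (simp add: abs_mult mult_left_le)
        then show "norm (A + B * ?P X) \<le> \<bar>A\<bar> + \<bar>B\<bar>" by simp
      qed
    qed
    show "AE x in Xm. 0 \<le> A + B * ?P x"
    proof (rule AE_I2)
      fix X
      have P0: "0 \<le> ?P X" and P1: "?P X \<le> 1" by auto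
      show "0 \<le> A + B * ?P X"
      proof (cases "0 \<le> B")
        case True then show ?thesis using A P0 by simp
      next
        case False then have "B * 1 \<le> B * ?P X" using P1 by (intro mult_left_mono_neg) auto
        then show ?thesis using A by simp
      qed
    qed
  qed
  also have "(\<integral>X. A + B * ?P X \<partial>Xm) = A + B * ptrig m D Dtrig S i"
  proof -
    have iP: "integrable Xm ?P" by (rule X.integrable_const_bound[where B=1]) (simp, rule Pm)
    have "(\<integral>X. A + B * ?P X \<partial>Xm) = (\<integral>X. A \<partial>Xm) + (\<integral>X. B * ?P X \<partial>Xm)"
      by (rule Bochner_Integration.integral_add) (rule X.integrable_const, rule integrable_mult_right, rule iP)
    then show ?thesis unfolding ptrig_def by (simp add: X.prob_space)
  qed
  finally show ?thesis by (simp add: inner)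
qed

end



lemma cnt_N_snoc: "cnt_N (h @ [r]) i = cnt_N h i + (if i \<in> fst (snd r) then 1 else 0)"
  unfolding cnt_N_def by (cases r) auto

lemma cnt_M_snoc: "cnt_M m D Dtrig (h @ [r]) i = cnt_M m D Dtrig h i + (if i \<in> trigset m D Dtrig (fst r) then 1 else 0)"
  unfolding cnt_M_def by (cases r) auto

lemma bad_count_snoc:
  "bad_count m I D Dtrig i \<rho> (h @ [r]) = bad_count m I D Dtrig i \<rho> h +
    (if i \<in> trigset m D Dtrig (fst r) \<and>
         real (cnt_N h i) \<le> (1 - \<rho>) * p_arm m I D Dtrig i * real (cnt_M m D Dtrig h i) then 1 else 0)"
  unfolding bad_count_def
  by (simp add: sum.lessThan_Suc nth_append take_append)

lemma bad_count_nonneg: "0 \<le> bad_count m I D Dtrig i \<rho> h"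
  unfolding bad_count_def by (intro sum_nonneg) auto

locale cts2 = cts +
  fixes p :: real
  assumes rho: "0 < \<rho>" "\<rho> < 1" and p: "0 < p" "p \<le> 1"
    and pdef: "p_arm m I D Dtrig i = p"
    and plow: "\<And>S. S \<in> I \<Longrightarrow> i \<in> trigset m D Dtrig S \<Longrightarrow> p \<le> ptrig m D Dtrig S i"
begin

definition "c = (1 - \<rho> * p) * (1 - \<rho>) powr (- ((1 - \<rho>) * p))"
definition "K = 1 / (1 - c)"
definition "ee h = real (cnt_N h i) - (1 - \<rho>) * p * real (cnt_M m D Dtrig h i)"
definition "V h = K * (1 - \<rho>) powr ee h"
definition "Phi h = bad_count m I D Dtrig i \<rho> h + V h"

lemma c_props: "0 \<le> c" "c < 1" "1 / (1 - c) \<le> 1 + 2 / (\<rho>^2 * p)"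
  using key_real[OF rho p p(1) order_refl] unfolding c_def by auto

lemma K_pos: "0 < K" using c_props unfolding K_def by simp

lemma K_eq: "1 + K * c = K"
  using c_props unfolding K_def by (simp add: field_simps)

lemma V_nonneg: "0 \<le> V h" unfolding V_def using K_pos by simp

lemma Phi_nonneg: "0 \<le> Phi h" unfolding Phi_def using V_nonneg bad_count_nonneg by (simp add: add_nonneg_nonneg)

lemma Phi_snoc:
  "Phi (h @ [(S, S', Y)]) = bad_count m I D Dtrig i \<rho> h +
     (if i \<in> trigset m D Dtrig S \<and> ee h \<le> 0 then 1 else 0) +
     K * (1 - \<rho>) powr (ee h - (if i \<in> trigset m D Dtrig S then (1 - \<rho>) * p else 0))
       * (if i \<in> S' then 1 - \<rho> else 1)"
proof -
  have e: "ee (h @ [(S, S', Y)]) = (ee h - (if i \<in> trigset m D Dtrig S then (1 - \<rho>) * p else 0))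
       + (if i \<in> S' then 1 else 0)"
    unfolding ee_def cnt_N_snoc cnt_M_snoc by (auto simp: algebra_simps)
  have b: "0 < 1 - \<rho>" using rho by simp
  show ?thesis unfolding Phi_def V_def bad_count_snoc e pdef
    using b by (auto simp: powr_add ee_def)
qed

lemma core:
  assumes S: "S \<in> I"
  shows "(\<integral>\<^sup>+X. \<integral>\<^sup>+z. ennreal (Phi (h @ [(S, fst z, snd z)])) \<partial>measure_pmf (obs_pmf Dtrig S X) \<partial>Xm)
         \<le> ennreal (Phi h)"
proof -
  define bc where "bc = bad_count m I D Dtrig i \<rho> h"
  define bt where "bt = (if i \<in> trigset m D Dtrig S \<and> ee h \<le> 0 then 1 else (0::real))"
  define w where "w = K * (1 - \<rho>) powr (ee h - (if i \<in> trigset m D Dtrig S then (1 - \<rho>) * p else 0))"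
  define pt where "pt = ptrig m D Dtrig S i"
  have b: "0 < 1 - \<rho>" using rho by simp
  have w0: "0 \<le> w" unfolding w_def using K_pos by simp
  have bc0: "0 \<le> bc" unfolding bc_def by (rule bad_count_nonneg)
  have bt0: "0 \<le> bt" unfolding bt_def by simp
  have pt: "0 \<le> pt" "pt \<le> 1" unfolding pt_def using ptrig_bounds[OF S] by auto
  have eq: "Phi (h @ [(S, fst z, snd z)]) = (bc + bt + w) + (- \<rho> * w) * (if i \<in> fst z then 1 else 0)" for z
    unfolding Phi_snoc bc_def bt_def w_def by (auto simp: algebra_simps)
  have "(\<integral>\<^sup>+X. \<integral>\<^sup>+z. ennreal (Phi (h @ [(S, fst z, snd z)])) \<partial>measure_pmf (obs_pmf Dtrig S X) \<partial>Xm)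
      = ennreal ((bc + bt + w) + (- \<rho> * w) * pt)"
    unfolding eq pt_def
  proof (rule L1[OF S])
    show "0 \<le> bc + bt + w" using bc0 bt0 w0 by simp
    have "\<rho> * w \<le> w" using mult_left_le_one_le[of w \<rho>] rho w0 by simp
    then show "0 \<le> bc + bt + w + - \<rho> * w" using bc0 bt0 by simp
  qed
  also have "\<dots> \<le> ennreal (Phi h)"
  proof (rule ennreal_leI)
    show "bc + bt + w + - \<rho> * w * pt \<le> Phi h"
    proof (cases "i \<in> trigset m D Dtrig S")
      case False
      then have "bt = 0" "w = V h" unfolding bt_def w_def V_def by auto
      moreover have "0 \<le> \<rho> * w * pt" using rho w0 pt by simp
      ultimately show ?thesis unfolding Phi_def bc_def by simp
    next
      case True
      define u where "u = (1 - \<rho>) powr ee h"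
      have wu: "w = K * u * (1 - \<rho>) powr (- ((1 - \<rho>) * p))"
        unfolding w_def u_def using True b by (simp add: powr_diff powr_minus divide_inverse)
      have btu: "bt \<le> u"
      proof (cases "ee h \<le> 0")
        case True
        have l: "ln (1 - \<rho>) < 0" using b rho by simp
        have "0 \<le> ee h * ln (1 - \<rho>)" using mult_nonpos_nonpos[of "ee h" "ln (1 - \<rho>)"] True l by simp
        then have "1 \<le> (1 - \<rho>) powr ee h"
          unfolding powr_def using b by simp
        then show ?thesis unfolding bt_def u_def by simp
      qed (auto simp: bt_def u_def)
      have pp: "p \<le> pt" unfolding pt_def by (rule plow[OF S True])
      have "- \<rho> * w * pt \<le> - \<rho> * w * p"
        using pp rho w0 by (simp add: mult_left_mono)
      then have "bc + bt + w + - \<rho> * w * pt \<le> bc + u + w * (1 - \<rho> * p)"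
        using btu by (simp add: algebra_simps)
      also have "w * (1 - \<rho> * p) = K * u * c" unfolding wu c_def by (simp add: algebra_simps)
      also have "bc + u + K * u * c = bc + u * (1 + K * c)" by (simp add: algebra_simps)
      also have "\<dots> = Phi h" unfolding K_eq Phi_def bc_def V_def u_def by (simp add: mult.commute)
      finally show ?thesis .
    qed
  qed
  finally show ?thesis .
qed

end



context cts2 begin

abbreviation "Th h \<equiv> PiM {..<m} (\<lambda>j. beta_measure (cts_a h j) (cts_b h j))"
abbreviation "R h \<equiv> cts_round m D Dtrig Oracle h"

definition "GG S = Xm \<bind> (\<lambda>X. measure_pmf (map_pmf (\<lambda>(S', Y). (S, S', Y)) (obs_pmf Dtrig S X)))"
definition "GG' S = (if S \<in> I then GG S else return (count_space UNIV) undefined)"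

lemma Th_prob: "prob_space (Th h)"
  by (intro prob_space_PiM beta_prob) (auto simp: cts_a_def cts_b_def)

lemma sets_Th: "sets (Th h) = sets (PiM {..<m} (\<lambda>_. borel))"
  by (intro sets_PiM_cong) (auto simp: beta_measure_def)

lemma GG_space: "S \<in> I \<Longrightarrow> GG S \<in> space (subprob_algebra (count_space UNIV))"
proof -
  assume S: "S \<in> I"
  interpret X: prob_space Xm by (rule Xm_prob)
  have k: "(\<lambda>X. measure_pmf (map_pmf (\<lambda>(S', Y). (S, S', Y)) (obs_pmf Dtrig S X))) \<in> measurable Xm (subprob_algebra (count_space UNIV))"
    by (rule obs_meas[OF S])
  have "subprob_space (GG S)" unfolding GG_def
    by (rule subprob_space_bind[OF _ k]) (rule X.subprob_space_axioms)
  moreover have "sets (GG S) = sets (count_space UNIV)" unfolding GG_def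
    by (rule sets_bind[OF _ X.not_empty]) simp
  ultimately show ?thesis by (simp add: space_subprob_algebra)
qed

lemma GG'_meas: "GG' \<in> measurable (count_space UNIV) (subprob_algebra (count_space UNIV))"
  unfolding measurable_count_space_eq1
  using GG_space by (auto simp: GG'_def space_subprob_algebra prob_space_return[THEN prob_space_imp_subprob_space])

lemma kern_meas: "(\<lambda>\<theta>. GG (Oracle \<theta>)) \<in> measurable (Th h) (subprob_algebra (count_space UNIV))"
proof -
  have o: "Oracle \<in> measurable (Th h) (count_space UNIV)"
    using orc_meas by (subst measurable_cong_sets[OF sets_Th refl])
  have "(\<lambda>\<theta>. GG' (Oracle \<theta>)) \<in> measurable (Th h) (subprob_algebra (count_space UNIV))"
    by (rule measurable_compose[OF o GG'_meas])
  moreover have "(\<lambda>\<theta>. GG' (Oracle \<theta>)) = (\<lambda>\<theta>. GG (Oracle \<theta>))"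
    using orc by (auto simp: GG'_def)
  ultimately show ?thesis by simp
qed

lemma R_eq: "R h = Th h \<bind> (\<lambda>\<theta>. GG (Oracle \<theta>))"
  unfolding cts_round_def GG_def ..

lemma R_space: "R h \<in> space (subprob_algebra (count_space UNIV))"
proof -
  interpret T: prob_space "Th h" by (rule Th_prob)
  have "subprob_space (R h)" unfolding R_eq
    by (rule subprob_space_bind[OF _ kern_meas]) (rule T.subprob_space_axioms)
  moreover have "sets (R h) = sets (count_space UNIV)" unfolding R_eq
    by (rule sets_bind[OF _ T.not_empty]) (use GG_space orc in \<open>auto simp: space_subprob_algebra\<close>)
  ultimately show ?thesis by (simp add: space_subprob_algebra)
qed

lemma step: "(\<integral>\<^sup>+r. ennreal (Phi (h @ [r])) \<partial>R h) \<le> ennreal (Phi h)"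
proof -
  interpret T: prob_space "Th h" by (rule Th_prob)
  have "(\<integral>\<^sup>+r. ennreal (Phi (h @ [r])) \<partial>R h) = (\<integral>\<^sup>+\<theta>. \<integral>\<^sup>+r. ennreal (Phi (h @ [r])) \<partial>GG (Oracle \<theta>) \<partial>Th h)"
    unfolding R_eq by (rule nn_integral_bind[OF _ kern_meas]) simp
  also have "\<dots> \<le> (\<integral>\<^sup>+\<theta>. ennreal (Phi h) \<partial>Th h)"
  proof (rule nn_integral_mono)
    fix \<theta>
    define S where "S = Oracle \<theta>"
    have S: "S \<in> I" using orc unfolding S_def by auto
    interpret X: prob_space Xm by (rule Xm_prob)
    have "(\<integral>\<^sup>+r. ennreal (Phi (h @ [r])) \<partial>GG S)
        = (\<integral>\<^sup>+X. \<integral>\<^sup>+r. ennreal (Phi (h @ [r])) \<partial>measure_pmf (map_pmf (\<lambda>(S', Y). (S, S', Y)) (obs_pmf Dtrig S X)) \<partial>Xm)"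
      unfolding GG_def by (rule nn_integral_bind[OF _ obs_meas[OF S]]) simp
    also have "\<dots> = (\<integral>\<^sup>+X. \<integral>\<^sup>+z. ennreal (Phi (h @ [(S, fst z, snd z)])) \<partial>measure_pmf (obs_pmf Dtrig S X) \<partial>Xm)"
      by (simp add: case_prod_beta)
    also have "\<dots> \<le> ennreal (Phi h)" by (rule core[OF S])
    finally show "(\<integral>\<^sup>+r. ennreal (Phi (h @ [r])) \<partial>GG (Oracle \<theta>)) \<le> ennreal (Phi h)"
      unfolding S_def .
  qed
  also have "\<dots> = ennreal (Phi h)" by (simp add: T.emeasure_space_1)
  finally show ?thesis .
qed

lemma traj:
  "sets (cts_traj m D Dtrig Oracle T) = sets (count_space UNIV) \<and>
   (\<integral>\<^sup>+h. ennreal (Phi h) \<partial>cts_traj m D Dtrig Oracle T) \<le> ennreal K"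
proof (induction T)
  case 0
  have "Phi [] = K" unfolding Phi_def V_def ee_def bad_count_def cnt_N_def cnt_M_def using rho by simp
  then show ?case by (simp add: nn_integral_return)
next
  case (Suc T)
  let ?M = "cts_traj m D Dtrig Oracle T"
  let ?k = "\<lambda>h. distr (R h) (count_space UNIV) (\<lambda>r. h @ [r])"
  have sM: "sets ?M = sets (count_space UNIV)" using Suc by simp
  have spM: "space ?M = UNIV" using sets_eq_imp_space_eq[OF sM] by simp
  have sR: "sets (R h) = sets (count_space UNIV)" "subprob_space (R h)" for h
    using R_space[of h] by (auto simp: space_subprob_algebra)
  have kin: "?k h \<in> space (subprob_algebra (count_space UNIV))" for h
  proof -
    have f: "(\<lambda>r. h @ [r]) \<in> measurable (R h) (count_space UNIV)"
      by (subst measurable_cong_sets[OF sR(1) refl]) simp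
    have "subprob_space (?k h)"
      by (rule subprob_space.subprob_space_distr[OF sR(2) f]) simp
    then show ?thesis by (simp add: space_subprob_algebra)
  qed
  have km: "?k \<in> measurable ?M (subprob_algebra (count_space UNIV))"
    by (subst measurable_cong_sets[OF sM refl]) (use kin in simp)
  have sets: "sets (cts_traj m D Dtrig Oracle (Suc T)) = sets (count_space UNIV)"
    by (simp only: cts_traj.simps, rule sets_bind) (auto simp: spM)
  have "(\<integral>\<^sup>+h. ennreal (Phi h) \<partial>cts_traj m D Dtrig Oracle (Suc T))
      = (\<integral>\<^sup>+h. \<integral>\<^sup>+x. ennreal (Phi x) \<partial>?k h \<partial>?M)"
    by (simp only: cts_traj.simps, rule nn_integral_bind[OF _ km]) simp
  also have "\<dots> = (\<integral>\<^sup>+h. \<integral>\<^sup>+r. ennreal (Phi (h @ [r])) \<partial>R h \<partial>?M)"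
  proof (rule nn_integral_cong)
    fix h
    have f: "(\<lambda>r. h @ [r]) \<in> measurable (R h) (count_space UNIV)"
      by (subst measurable_cong_sets[OF sR(1) refl]) simp
    show "(\<integral>\<^sup>+x. ennreal (Phi x) \<partial>?k h) = (\<integral>\<^sup>+r. ennreal (Phi (h @ [r])) \<partial>R h)"
      by (rule nn_integral_distr[OF f]) simp
  qed
  also have "\<dots> \<le> (\<integral>\<^sup>+h. ennreal (Phi h) \<partial>?M)"
    by (rule nn_integral_mono) (rule step)
  also have "\<dots> \<le> ennreal K" using Suc by simp
  finally show ?case using sets by simp
qed

lemma final: "(\<integral>h. bad_count m I D Dtrig i \<rho> h \<partial>(cts_traj m D Dtrig Oracle T)) \<le> 1 + 2 / (\<rho>^2 * p)"
proof -
  have "(\<integral>h. bad_count m I D Dtrig i \<rho> h \<partial>(cts_traj m D Dtrig Oracle T)) \<le> K"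
  proof (rule integral_real_bounded)
    show "0 \<le> K" using K_pos by simp
    have "(\<integral>\<^sup>+h. ennreal (bad_count m I D Dtrig i \<rho> h) \<partial>cts_traj m D Dtrig Oracle T)
        \<le> (\<integral>\<^sup>+h. ennreal (Phi h) \<partial>cts_traj m D Dtrig Oracle T)"
      by (rule nn_integral_mono, rule ennreal_leI) (simp add: Phi_def V_nonneg)
    also have "\<dots> \<le> ennreal K" using traj by blast
    finally show "(\<integral>\<^sup>+h. ennreal (bad_count m I D Dtrig i \<rho> h) \<partial>cts_traj m D Dtrig Oracle T) \<le> ennreal K" .
  qed
  also have "K \<le> 1 + 2 / (\<rho>^2 * p)" using c_props unfolding K_def by simp
  finally show ?thesis .
qed

end



theorem lemma1:
  fixes m :: nat and I :: "nat set set" and D :: "nat \<Rightarrow> real measure"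
    and Dtrig :: "nat set \<Rightarrow> (nat \<Rightarrow> real) \<Rightarrow> nat set pmf"
    and r :: "nat set \<Rightarrow> (nat \<Rightarrow> real) \<Rightarrow> real"
    and Oracle :: "(nat \<Rightarrow> real) \<Rightarrow> nat set"
    and i T :: nat and \<rho> :: real
  assumes I_fin: "finite I" and I_ne: "I \<noteq> {}" and I_sub: "\<forall>S\<in>I. S \<subseteq> {..<m}"
    and D: "\<forall>j<m. prob_space (D j) \<and> sets (D j) = sets borel \<and> emeasure (D j) {0..1} = 1"
    and trig: "\<forall>S\<in>I. \<forall>X. set_pmf (Dtrig S X) \<subseteq> {S'. S \<subseteq> S' \<and> S' \<subseteq> {..<m}}"
    and trig_meas: "\<forall>S\<in>I. (\<lambda>X. measure_pmf (Dtrig S X))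
                      \<in> measurable (PiM {..<m} (\<lambda>_. borel)) (subprob_algebra (count_space UNIV))"
    and orc: "\<forall>\<theta>. Oracle \<theta> \<in> I \<and> (\<forall>S\<in>I. r S \<theta> \<le> r (Oracle \<theta>) \<theta>)"
    and orc_meas: "Oracle \<in> measurable (PiM {..<m} (\<lambda>_. borel)) (count_space UNIV)"
    and trig_all: "\<forall>j<m. \<exists>S\<in>I. j \<in> trigset m D Dtrig S"
    and pstar_pos: "p_star m I D Dtrig > 0"
    and i: "i < m" and rho: "0 < \<rho>" "\<rho> < 1"
  shows "(\<integral>h. bad_count m I D Dtrig i \<rho> h \<partial>(cts_traj m D Dtrig Oracle T))
           \<le> 1 + 2 / (\<rho>\<^sup>2 * p_star m I D Dtrig)"
proof -
  interpret C: cts m I D Dtrig Oracle i \<rho>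
    using D trig trig_meas orc orc_meas by unfold_locales auto
  define p where "p = p_arm m I D Dtrig i"
  let ?P = "{ptrig m D Dtrig S i | S. S \<in> I \<and> i \<in> trigset m D Dtrig S}"
  have finP: "finite ?P"
    by (rule finite_image_set) (rule finite_subset[OF _ I_fin], auto)
  obtain S0 where S0: "S0 \<in> I" "i \<in> trigset m D Dtrig S0" using trig_all i by blast
  have plow: "p \<le> ptrig m D Dtrig S i" if "S \<in> I" "i \<in> trigset m D Dtrig S" for S
    unfolding p_def p_arm_def using finP that by (intro Min_le) auto
  have p1: "p \<le> 1" using plow[OF S0] C.ptrig_bounds[OF S0(1)] by simp
  have ps: "p_star m I D Dtrig \<le> p"
    unfolding p_star_def p_def using i by (intro Min_le) auto
  have p0: "0 < p" using ps pstar_pos by simp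
  interpret C2: cts2 m I D Dtrig Oracle i \<rho> p
    using rho p0 p1 plow by unfold_locales (auto simp: p_def)
  have "(\<integral>h. bad_count m I D Dtrig i \<rho> h \<partial>(cts_traj m D Dtrig Oracle T)) \<le> 1 + 2 / (\<rho>^2 * p)"
    by (rule C2.final)
  also have "2 / (\<rho>^2 * p) \<le> 2 / (\<rho>^2 * p_star m I D Dtrig)"
    using rho ps pstar_pos by (intro divide_left_mono mult_left_mono mult_pos_pos) auto
  finally show ?thesis by simp
qed


end
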